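(* Let $A=[1,1,\dots,1]\in\mathbb R^{1\times N}$, $\vec w\in\mathbb R^N$ with $\sum_{i=1}^N w_i>0$, $b=A\vec w$, and let $\vec x$ be the minimizer of $\frac12\|\vec x-\vec w\|_2^2$ over $\vec x\in\mathbb R^N$ subject to $A\vec x=b$ and $x_i\ge0$ for all $i$. Assume at least one entry of $\vec w$ is strictly less than $0$. Then for every index $i$ with $w_i\le0$ we have $x_i=0$. *)

theory Defs
  imports "HOL-Analysis.Analysis"
begin

definition feasible :: "real \<Rightarrow> real ^ 'n \<Rightarrow> bool" where
  "feasible b x \<longleftrightarrow> (\<Sum>i\<in>UNIV. x $ i) = b \<and> (\<forall>i. x $ i \<ge> 0)"

definition is_minimizer :: "real ^ 'n \<Rightarrow> real \<Rightarrow> real ^ 'n \<Rightarrow> bool" where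
  "is_minimizer w b x \<longleftrightarrow> feasible b x \<and>
     (\<forall>y. feasible b y \<longrightarrow> (1/2) * (norm (x - w))\<^sup>2 \<le> (1/2) * (norm (y - w))\<^sup>2)"

end

theory Submission
  imports Defs
begin

lemma sq_norm_vec: "(norm (v::real^'n))\<^sup>2 = (\<Sum>j\<in>UNIV. (v$j)\<^sup>2)"
  unfolding power2_norm_eq_inner inner_vec_def by (simp add: power2_eq_square)

lemma sum_two:
  fixes f :: "'n::finite \<Rightarrow> real"
  assumes "\<And>j. j \<noteq> i \<Longrightarrow> j \<noteq> k \<Longrightarrow> f j = 0" "i \<noteq> k"
  shows "(\<Sum>j\<in>UNIV. f j) = f i + f k"
proof -
  have "(\<Sum>j\<in>UNIV. f j) = (\<Sum>j\<in>{i,k}. f j)"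
    by (rule sum.mono_neutral_right) (use assms in auto)
  thus ?thesis using assms(2) by simp
qed

theorem lemma2:
  fixes w x :: "real ^ 'n" and b :: real
  assumes "(\<Sum>i\<in>UNIV. w $ i) > 0"
    and "b = (\<Sum>i\<in>UNIV. w $ i)"
    and "is_minimizer w b x"
    and "\<exists>j. w $ j < 0"
  shows "\<forall>i. w $ i \<le> 0 \<longrightarrow> x $ i = 0"
proof (intro allI impI, rule ccontr)
  fix i assume wi: "w $ i \<le> 0" and ne: "x $ i \<noteq> 0"
  have feas: "feasible b x" and opt: "\<And>y. feasible b y \<Longrightarrow> (1/2) * (norm (x - w))\<^sup>2 \<le> (1/2) * (norm (y - w))\<^sup>2"
    using assms(3) unfolding is_minimizer_def by auto
  have xpos: "x $ i > 0" using feas ne unfolding feasible_def by (metis less_eq_real_def)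
  have sx: "(\<Sum>j\<in>UNIV. x $ j) = (\<Sum>j\<in>UNIV. w $ j)" using feas assms(2) unfolding feasible_def by simp
  have "\<exists>k. k \<noteq> i \<and> x $ k < w $ k"
  proof (rule ccontr)
    assume "\<not> ?thesis"
    hence h: "\<And>k. k \<noteq> i \<Longrightarrow> w $ k \<le> x $ k" by force
    have "(\<Sum>j\<in>UNIV - {i}. w $ j) \<le> (\<Sum>j\<in>UNIV - {i}. x $ j)" by (rule sum_mono) (use h in auto)
    moreover have "(\<Sum>j\<in>UNIV. x $ j) = x $ i + (\<Sum>j\<in>UNIV - {i}. x $ j)"
      by (simp add: sum.remove)
    moreover have "(\<Sum>j\<in>UNIV. w $ j) = w $ i + (\<Sum>j\<in>UNIV - {i}. w $ j)"
      by (simp add: sum.remove)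
    ultimately show False using sx xpos wi by linarith
  qed
  then obtain k where ki: "k \<noteq> i" and xk: "x $ k < w $ k" by blast
  define t where "t = min (x $ i) (((x$i - w$i) + (w$k - x$k))/2)"
  have t0: "t > 0" and tx: "t \<le> x $ i" and tt: "t < (x$i - w$i) + (w$k - x$k)"
    using xpos wi xk unfolding t_def by auto
  define y :: "real^'n" where "y = (\<chi> j. if j = i then x$i - t else if j = k then x$k + t else x$j)"
  have yi: "y $ i = x $ i - t" and yk: "y $ k = x $ k + t" and yo: "\<And>j. j \<noteq> i \<Longrightarrow> j \<noteq> k \<Longrightarrow> y $ j = x $ j"
    unfolding y_def using ki by auto
  have "(\<Sum>j\<in>UNIV. y $ j - x $ j) = (y$i - x$i) + (y$k - x$k)"
    by (rule sum_two) (use yo ki in auto)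
  hence "(\<Sum>j\<in>UNIV. y $ j) - (\<Sum>j\<in>UNIV. x $ j) = 0" using yi yk by (simp add: sum_subtractf)
  moreover have "\<forall>j. y $ j \<ge> 0"
  proof
    fix j show "y $ j \<ge> 0"
      using feas yi yk yo tx t0 unfolding feasible_def
      by (cases "j = i"; cases "j = k") (auto intro: add_nonneg_nonneg)
  qed
  ultimately have fy: "feasible b y" using feas unfolding feasible_def by simp
  have "(\<Sum>j\<in>UNIV. ((y-w)$j)\<^sup>2 - ((x-w)$j)\<^sup>2) = (((y-w)$i)\<^sup>2 - ((x-w)$i)\<^sup>2) + (((y-w)$k)\<^sup>2 - ((x-w)$k)\<^sup>2)"
    by (rule sum_two) (use yo ki in auto)
  also have "\<dots> = 2*t*((x$k - w$k) - (x$i - w$i) + t)"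
    unfolding vector_minus_component yi yk by (simp add: power2_eq_square algebra_simps)
  also have "\<dots> < 0" using t0 tt by (simp add: mult_pos_neg)
  finally have "(norm (y - w))\<^sup>2 - (norm (x - w))\<^sup>2 < 0"
    by (simp add: sq_norm_vec sum_subtractf)
  with opt[OF fy] show False by linarith
qed

end
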